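(* Let $(X,P,o)$ be a generalized parametric metric space such that $P$ satisfies (P5) and $o$ is continuous. Then $(X,\tau_P)$ is a Hausdorff topological space.
   Context: A binary operation $o:[0,\infty)\times[0,\infty)\to[0,\infty)$ (written $\alpha\, o\, \beta$) is assumed to satisfy, for all $\alpha,\beta,\gamma\in[0,\infty)$: (a) $\alpha\, o\, 0=\alpha$; (b) $\alpha\le\beta\implies \alpha\, o\,\gamma\le\beta\, o\,\gamma$; (c) $\alpha\, o\,\gamma=\gamma\, o\,\alpha$; (d) $\alpha\, o\,(\beta\, o\,\gamma)=(\alpha\, o\,\beta)\, o\,\gamma$. It is continuous if whenever $\alpha_n\to\alpha$ and $\beta_n\to\beta$ in $[0,\infty)$ we have $\alpha_n\, o\,\beta_n\to\alpha\, o\,\beta$. A generalized parametric metric on a nonempty set $X$ is a function $P:X\times X\times(0,\infty)\to[0,\infty)$ such that: (P1) $P(a,b,t)=0$ for all $t>0$ if and only if $a=b$; (P2) $P(a,b,t)=P(b,a,t)$ for all $a,b\in X$, $t>0$; (P3) $P(a,b,s+t)\le P(a,x,s)\, o\, P(b,x,t)$ for all $s,t>0$ and $a,b,x\in X$. The triple $(X,P,o)$ is a generalized parametric metric space. Condition (P5): for all $a,b\in X$, the map $t\mapsto P(a,b,t)$ is continuous on $(0,\infty)$. Open ball: $B(a,\alpha,t)=\{b\in X: P(a,b,t)<\alpha\}$. $\tau_P$ is the topology consisting of all $A\subseteq X$ such that for every $a\in A$ there exist $\alpha>0,t>0$ with $B(a,\alpha,t)\subseteq A$. *)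

theory Defs
  imports "HOL-Analysis.Analysis"
begin

definition binop_axioms :: "(real \<Rightarrow> real \<Rightarrow> real) \<Rightarrow> bool" where
  "binop_axioms op \<longleftrightarrow>
     (\<forall>a\<ge>0. \<forall>b\<ge>0. op a b \<ge> 0) \<and>
     (\<forall>a\<ge>0. op a 0 = a) \<and>
     (\<forall>a b c. 0 \<le> a \<and> a \<le> b \<and> 0 \<le> c \<longrightarrow> op a c \<le> op b c) \<and>
     (\<forall>a\<ge>0. \<forall>c\<ge>0. op a c = op c a) \<and>
     (\<forall>a\<ge>0. \<forall>b\<ge>0. \<forall>c\<ge>0. op a (op b c) = op (op a b) c)"

definition binop_continuous :: "(real \<Rightarrow> real \<Rightarrow> real) \<Rightarrow> bool" where
  "binop_continuous op \<longleftrightarrow>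
     (\<forall>a b (as :: nat \<Rightarrow> real) bs. (\<forall>n. as n \<ge> 0 \<and> bs n \<ge> 0) \<and> a \<ge> 0 \<and> b \<ge> 0 \<and>
        as \<longlonglongrightarrow> a \<and> bs \<longlonglongrightarrow> b \<longrightarrow> (\<lambda>n. op (as n) (bs n)) \<longlonglongrightarrow> op a b)"

definition gen_param_metric :: "'a set \<Rightarrow> ('a \<Rightarrow> 'a \<Rightarrow> real \<Rightarrow> real) \<Rightarrow> (real \<Rightarrow> real \<Rightarrow> real) \<Rightarrow> bool" where
  "gen_param_metric X P op \<longleftrightarrow>
     X \<noteq> {} \<and> binop_axioms op \<and>
     (\<forall>a\<in>X. \<forall>b\<in>X. \<forall>t>0. P a b t \<ge> 0) \<and>
     (\<forall>a\<in>X. \<forall>b\<in>X. (\<forall>t>0. P a b t = 0) \<longleftrightarrow> a = b) \<and>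
     (\<forall>a\<in>X. \<forall>b\<in>X. \<forall>t>0. P a b t = P b a t) \<and>
     (\<forall>a\<in>X. \<forall>b\<in>X. \<forall>x\<in>X. \<forall>s>0. \<forall>t>0. P a b (s + t) \<le> op (P a x s) (P b x t))"

definition P5 :: "'a set \<Rightarrow> ('a \<Rightarrow> 'a \<Rightarrow> real \<Rightarrow> real) \<Rightarrow> bool" where
  "P5 X P \<longleftrightarrow> (\<forall>a\<in>X. \<forall>b\<in>X. continuous_on {0<..} (P a b))"

definition pball :: "'a set \<Rightarrow> ('a \<Rightarrow> 'a \<Rightarrow> real \<Rightarrow> real) \<Rightarrow> 'a \<Rightarrow> real \<Rightarrow> real \<Rightarrow> 'a set" where
  "pball X P a \<alpha> t = {b\<in>X. P a b t < \<alpha>}"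

definition tau_P :: "'a set \<Rightarrow> ('a \<Rightarrow> 'a \<Rightarrow> real \<Rightarrow> real) \<Rightarrow> 'a set set" where
  "tau_P X P = {A. A \<subseteq> X \<and> (\<forall>a\<in>A. \<exists>\<alpha>>0. \<exists>t>0. pball X P a \<alpha> t \<subseteq> A)}"

end

theory Submission
  imports Defs
begin

lemma gpm_facts:
  assumes "gen_param_metric X P op"
  shows "\<And>a b t. a\<in>X \<Longrightarrow> b\<in>X \<Longrightarrow> t>0 \<Longrightarrow> P a b t \<ge> 0"
    and "\<And>a t. a\<in>X \<Longrightarrow> t>0 \<Longrightarrow> P a a t = 0"
    and "\<And>a b. a\<in>X \<Longrightarrow> b\<in>X \<Longrightarrow> a \<noteq> b \<Longrightarrow> \<exists>t>0. P a b t \<noteq> 0"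
    and "\<And>a b x s t. a\<in>X \<Longrightarrow> b\<in>X \<Longrightarrow> x\<in>X \<Longrightarrow> s>0 \<Longrightarrow> t>0 \<Longrightarrow> P a b (s + t) \<le> op (P a x s) (P b x t)"
    and "\<And>a b. a\<ge>0 \<Longrightarrow> b \<ge> 0 \<Longrightarrow> op a b \<ge> 0"
    and "\<And>a. a\<ge>0 \<Longrightarrow> op a 0 = a"
    and "\<And>a b c. 0 \<le> a \<Longrightarrow> a \<le> b \<Longrightarrow> 0 \<le> c \<Longrightarrow> op a c \<le> op b c"
    and "\<And>a b c. 0 \<le> a \<Longrightarrow> a \<le> b \<Longrightarrow> 0 \<le> c \<Longrightarrow> op c a \<le> op c b"
proof -
  have A: "binop_axioms op" and B: "\<forall>a\<in>X. \<forall>b\<in>X. \<forall>t>0. P a b t \<ge> 0"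
    and C: "\<forall>a\<in>X. \<forall>b\<in>X. (\<forall>t>0. P a b t = 0) \<longleftrightarrow> a = b"
    and D: "\<forall>a\<in>X. \<forall>b\<in>X. \<forall>x\<in>X. \<forall>s>0. \<forall>t>0. P a b (s + t) \<le> op (P a x s) (P b x t)"
    using assms unfolding gen_param_metric_def by simp_all
  have E: "\<forall>a\<ge>0. \<forall>b\<ge>0. op a b \<ge> 0" and F: "\<forall>a\<ge>0. op a 0 = a"
    and G: "\<forall>a b c. 0 \<le> a \<and> a \<le> b \<and> 0 \<le> c \<longrightarrow> op a c \<le> op b c"
    and H: "\<forall>a\<ge>0. \<forall>c\<ge>0. op a c = op c a"
    using A unfolding binop_axioms_def by simp_all
  show "\<And>a b t. a\<in>X \<Longrightarrow> b\<in>X \<Longrightarrow> t>0 \<Longrightarrow> P a b t \<ge> 0" using B by blast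
  show "\<And>a t. a\<in>X \<Longrightarrow> t>0 \<Longrightarrow> P a a t = 0" using C by blast
  show "\<And>a b. a\<in>X \<Longrightarrow> b\<in>X \<Longrightarrow> a \<noteq> b \<Longrightarrow> \<exists>t>0. P a b t \<noteq> 0" using C by blast
  show "\<And>a b x s t. a\<in>X \<Longrightarrow> b\<in>X \<Longrightarrow> x\<in>X \<Longrightarrow> s>0 \<Longrightarrow> t>0 \<Longrightarrow> P a b (s + t) \<le> op (P a x s) (P b x t)"
    using D by blast
  show "\<And>a b. a\<ge>0 \<Longrightarrow> b \<ge> 0 \<Longrightarrow> op a b \<ge> 0" using E by blast
  show "\<And>a. a\<ge>0 \<Longrightarrow> op a 0 = a" using F by blast
  show "\<And>a b c. 0 \<le> a \<Longrightarrow> a \<le> b \<Longrightarrow> 0 \<le> c \<Longrightarrow> op a c \<le> op b c" using G by blast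
  show "\<And>a b c. 0 \<le> a \<Longrightarrow> a \<le> b \<Longrightarrow> 0 \<le> c \<Longrightarrow> op c a \<le> op c b"
  proof -
    fix a b c :: real assume "0 \<le> a" "a \<le> b" "0 \<le> c"
    then have "op a c \<le> op b c" "op c a = op a c" "op c b = op b c" using G H by auto
    then show "op c a \<le> op c b" by simp
  qed
qed

lemma gpm_mono:
  assumes g: "gen_param_metric X P op" and "a\<in>X" "b\<in>X" "0<s" "s\<le>t"
  shows "P a b t \<le> P a b s"
proof (cases "s = t")
  case False
  then have "t - s > 0" using assms by simp
  then have "P a b (s + (t - s)) \<le> op (P a b s) (P b b (t - s))"
    using gpm_facts(4)[OF g] assms by blast
  also have "\<dots> = P a b s" using gpm_facts(1,2,6)[OF g] assms \<open>t - s > 0\<close> by simp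
  finally show ?thesis by simp
qed simp

lemma ball_open:
  assumes g: "gen_param_metric X P op" and p5: "P5 X P" and c: "binop_continuous op"
    and a: "a \<in> X" and s: "s > 0"
  shows "pball X P a \<alpha> s \<in> tau_P X P"
  unfolding tau_P_def
proof (safe)
  show "x \<in> X" if "x \<in> pball X P a \<alpha> s" for x using that by (simp add: pball_def)
  fix x assume xb: "x \<in> pball X P a \<alpha> s"
  then have x: "x \<in> X" and lt: "P a x s < \<alpha>" by (auto simp: pball_def)
  define d where "d n = inverse (real (Suc n))" for n
  define r where "r n = s/2 * d n" for n
  have d0: "d \<longlonglongrightarrow> 0" unfolding d_def by (rule LIMSEQ_inverse_real_of_nat)
  have r0: "r \<longlonglongrightarrow> 0" unfolding r_def using d0 by (rule tendsto_mult_right_zero)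
  have dpos: "d n > 0" for n unfolding d_def by simp
  have rpos: "r n > 0" for n unfolding r_def using dpos[of n] s by simp
  have rlt: "r n < s" for n
  proof -
    have "d n \<le> 1" unfolding d_def by (simp add: field_simps)
    then have "r n \<le> s/2" unfolding r_def using s by (simp add: mult_left_le)
    then show ?thesis using s by simp
  qed
  have cont: "continuous_on {0<..} (P a x)" using p5 a x by (simp add: P5_def)
  have "isCont (P a x) s" using cont s
    by (simp add: continuous_on_eq_continuous_at)
  moreover have "(\<lambda>n. s - r n) \<longlonglongrightarrow> s" using tendsto_diff[OF tendsto_const r0] by simp
  ultimately have t1: "(\<lambda>n. P a x (s - r n)) \<longlonglongrightarrow> P a x s"
    by (rule isCont_tendsto_compose)
  have nn: "P a x (s - r n) \<ge> 0" for n using gpm_facts(1)[OF g a x] rlt[of n] by simp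
  have pnn: "P a x s \<ge> 0" using gpm_facts(1)[OF g a x s] .
  have "(\<lambda>n. op (P a x (s - r n)) (d n)) \<longlonglongrightarrow> op (P a x s) 0"
    using c t1 d0 nn dpos pnn unfolding binop_continuous_def
    by (metis less_eq_real_def order_refl)
  then have "(\<lambda>n. op (P a x (s - r n)) (d n)) \<longlonglongrightarrow> P a x s"
    using gpm_facts(6)[OF g pnn] by simp
  then have "eventually (\<lambda>n. op (P a x (s - r n)) (d n) < \<alpha>) sequentially"
    using lt by (rule order_tendstoD(2))
  then obtain N where N: "op (P a x (s - r N)) (d N) < \<alpha>"
    by (auto simp: eventually_sequentially)
  show "\<exists>\<alpha>'>0. \<exists>t>0. pball X P x \<alpha>' t \<subseteq> pball X P a \<alpha> s"
  proof (intro exI conjI)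
    show "d N > 0" "r N > 0" by (fact dpos rpos)+
    show "pball X P x (d N) (r N) \<subseteq> pball X P a \<alpha> s"
    proof
      fix y assume "y \<in> pball X P x (d N) (r N)"
      then have y: "y \<in> X" and py: "P x y (r N) < d N" by (auto simp: pball_def)
      have "P a y ((s - r N) + r N) \<le> op (P a x (s - r N)) (P y x (r N))"
        using gpm_facts(4)[OF g a y x, of "s - r N" "r N"] rlt[of N] rpos[of N] by simp
      also have "\<dots> \<le> op (P a x (s - r N)) (d N)"
      proof (rule gpm_facts(8)[OF g])
        show "0 \<le> P y x (r N)" using gpm_facts(1)[OF g y x rpos] .
        have "P y x (r N) = P x y (r N)" using g x y rpos[of N]
          unfolding gen_param_metric_def by blast
        then show "P y x (r N) \<le> d N" using py by simp
        show "0 \<le> P a x (s - r N)" by (fact nn)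
      qed
      finally show "y \<in> pball X P a \<alpha> s" using N y by (simp add: pball_def)
    qed
  qed
qed

theorem mainTheorem7:
  fixes X :: "'a set" and P :: "'a \<Rightarrow> 'a \<Rightarrow> real \<Rightarrow> real" and op :: "real \<Rightarrow> real \<Rightarrow> real"
  assumes "gen_param_metric X P op" and "P5 X P" and "binop_continuous op"
  shows "istopology (\<lambda>A. A \<in> tau_P X P) \<and>
         topspace (topology (\<lambda>A. A \<in> tau_P X P)) = X \<and>
         Hausdorff_space (topology (\<lambda>A. A \<in> tau_P X P))"
proof -
  note g = assms(1)
  have top: "istopology (\<lambda>A. A \<in> tau_P X P)"
    unfolding istopology_def
  proof (intro conjI allI impI)
    fix S T assume S: "S \<in> tau_P X P" and T: "T \<in> tau_P X P"
    show "S \<inter> T \<in> tau_P X P" unfolding tau_P_def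
    proof (safe)
      show "x \<in> X" if "x \<in> S" for x using S that by (auto simp: tau_P_def)
      fix a assume aS: "a \<in> S" and aT: "a \<in> T"
      obtain a1 t1 where 1: "a1 > 0" "t1 > 0" "pball X P a a1 t1 \<subseteq> S"
        using S aS by (auto simp: tau_P_def)
      obtain a2 t2 where 2: "a2 > 0" "t2 > 0" "pball X P a a2 t2 \<subseteq> T"
        using T aT by (auto simp: tau_P_def)
      have aX: "a \<in> X" using S aS by (auto simp: tau_P_def)
      have sub: "pball X P a (min a1 a2) (min t1 t2) \<subseteq> pball X P a a1 t1 \<inter> pball X P a a2 t2"
      proof
        fix y assume "y \<in> pball X P a (min a1 a2) (min t1 t2)"
        then have y: "y \<in> X" and py: "P a y (min t1 t2) < min a1 a2" by (auto simp: pball_def)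
        have "P a y t1 \<le> P a y (min t1 t2)" "P a y t2 \<le> P a y (min t1 t2)"
          using gpm_mono[OF g aX y] 1 2 by auto
        then show "y \<in> pball X P a a1 t1 \<inter> pball X P a a2 t2"
          using py y by (auto simp: pball_def)
      qed
      show "\<exists>\<alpha>>0. \<exists>t>0. pball X P a \<alpha> t \<subseteq> S \<inter> T"
        using sub 1 2 by (intro exI[of _ "min a1 a2"] conjI exI[of _ "min t1 t2"]) auto
    qed
  next
    fix K assume K: "\<forall>K\<in>K. K \<in> tau_P X P"
    show "\<Union>K \<in> tau_P X P" unfolding tau_P_def
    proof (safe)
      fix x k assume "x \<in> k" "k \<in> K" then show "x \<in> X" using K by (auto simp: tau_P_def)
    next
      fix x k assume xk: "x \<in> k" and kK: "k \<in> K"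
      then obtain \<alpha> t where "\<alpha>>0" "t>0" "pball X P x \<alpha> t \<subseteq> k" using K xk kK unfolding tau_P_def by blast
      then show "\<exists>\<alpha>>0. \<exists>t>0. pball X P x \<alpha> t \<subseteq> \<Union>K" using kK by blast
    qed
  qed
  have XT: "X \<in> tau_P X P" unfolding tau_P_def pball_def
    by (auto intro!: exI[of _ 1])
  have ts: "topspace (topology (\<lambda>A. A \<in> tau_P X P)) = X"
    unfolding topspace_def using top XT by (auto simp: tau_P_def)
  have "Hausdorff_space (topology (\<lambda>A. A \<in> tau_P X P))"
    unfolding Hausdorff_space_def ts
  proof (intro allI impI)
    fix a b assume H: "a \<in> X \<and> b \<in> X \<and> a \<noteq> b"
    then have a: "a \<in> X" and b: "b \<in> X" and ab: "a \<noteq> b" by auto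
    obtain t0 where t0: "t0 > 0" "P a b t0 \<noteq> 0" using gpm_facts(3)[OF g a b ab] by blast
    define \<epsilon> where "\<epsilon> = P a b t0"
    have ep: "\<epsilon> > 0" using gpm_facts(1)[OF g a b t0(1)] t0 unfolding \<epsilon>_def by simp
    define d where "d n = inverse (real (Suc n))" for n
    have d0: "d \<longlonglongrightarrow> 0" unfolding d_def by (rule LIMSEQ_inverse_real_of_nat)
    have dpos: "d n > 0" for n unfolding d_def by simp
    have "(\<lambda>n. op (d n) (d n)) \<longlonglongrightarrow> op 0 0"
      using assms(3) d0 dpos unfolding binop_continuous_def
      by (metis less_eq_real_def order_refl)
    then have "(\<lambda>n. op (d n) (d n)) \<longlonglongrightarrow> 0" using gpm_facts(6)[OF g, of 0] by simp
    then have "eventually (\<lambda>n. op (d n) (d n) < \<epsilon>) sequentially"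
      using ep by (rule order_tendstoD(2))
    then obtain N where N: "op (d N) (d N) < \<epsilon>" by (auto simp: eventually_sequentially)
    define s where "s = t0/2"
    have s: "s > 0" using t0 by (simp add: s_def)
    let ?U = "pball X P a (d N) s" and ?V = "pball X P b (d N) s"
    have "?U \<in> tau_P X P" "?V \<in> tau_P X P"
      using ball_open[OF assms a s] ball_open[OF assms b s] by auto
    moreover have "a \<in> ?U" "b \<in> ?V"
      using a b gpm_facts(2)[OF g] s dpos by (auto simp: pball_def)
    moreover have "disjnt ?U ?V"
    proof (rule ccontr)
      assume "\<not> disjnt ?U ?V"
      then obtain c where c: "c \<in> X" "P a c s < d N" "P b c s < d N"
        by (auto simp: disjnt_def pball_def)
      have "P a b (s + s) \<le> op (P a c s) (P b c s)"
        using gpm_facts(4)[OF g a b c(1) s s] .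
      also have "\<dots> \<le> op (d N) (P b c s)"
        using gpm_facts(7)[OF g] gpm_facts(1)[OF g a c(1) s] gpm_facts(1)[OF g b c(1) s] c by simp
      also have "\<dots> \<le> op (d N) (d N)"
        using gpm_facts(8)[OF g] gpm_facts(1)[OF g b c(1) s] c dpos[of N] by simp
      finally have "P a b t0 < \<epsilon>" using N by (simp add: s_def)
      then show False unfolding \<epsilon>_def by simp
    qed
    ultimately show "\<exists>U V. openin (topology (\<lambda>A. A \<in> tau_P X P)) U \<and>
        openin (topology (\<lambda>A. A \<in> tau_P X P)) V \<and> a \<in> U \<and> b \<in> V \<and> disjnt U V"
      using top by (intro exI[of _ ?U] exI[of _ ?V]) (simp add: topology_inverse')
  qed
  then show ?thesis using top ts by simp
qed

end
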